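(* Let $f\in\mathbb{F}[V]$ be an isobaric polynomial of weight $\lambda\in\mathbb{Z}/(q-1)\mathbb{Z}$ whose $P$-orbit $fP$ has $|fP|=|P|$ (i.e., the stabiliser of $f$ in $P$ is trivial). Then the orbit product $\prod fP=\prod_{\sigma\in P}f\sigma$ is isobaric of weight $\lambda$.
   Context: Let $p>2$ be a prime, $q=p^n$, and $\mathbb{F}$ a field of characteristic $p$ containing $\mathbb{F}_q$. Let $\mathbb{F}[V]=\mathbb{F}[a_0,a_1,a_2]$. For $c\in\mathbb{F}_q$ let $\sigma_c=\begin{pmatrix}1&c\\0&1\end{pmatrix}$, acting on the right on $\mathbb{F}[a_0,a_1,a_2]$ by the algebra automorphism $a_2\mapsto a_2+2ca_1+c^2a_0$, $a_1\mapsto a_1+ca_0$, $a_0\mapsto a_0$, and let $P=\{\sigma_c: c\in\mathbb{F}_q\}$. The weight of a monomial $a_0^{e_0}a_1^{e_1}a_2^{e_2}$ is $e_1+2e_2$ taken in $\mathbb{Z}/(q-1)\mathbb{Z}$ (i.e., $\mathrm{wt}(a_i)=i$, extended multiplicatively-to-additively); a polynomial is isobaric of weight $\lambda$ if all its monomials have weight $\lambda$. *)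

theory Defs
  imports "HOL-Library.Poly_Mapping" "HOL-Library.Product_Plus" "HOL-Computational_Algebra.Primes"
begin

text \<open>Polynomials in F[a0,a1,a2], represented by their coefficient function on exponent
  triples (e0,e1,e2) with finite support.\<close>
type_synonym 'a mpoly3 = "(nat \<times> nat \<times> nat) \<Rightarrow>\<^sub>0 'a"

definition const3 :: "'a::comm_ring_1 \<Rightarrow> 'a mpoly3" where
  "const3 c = Poly_Mapping.single (0,0,0) c"

definition A0 :: "'a::comm_ring_1 mpoly3" where "A0 = Poly_Mapping.single (1,0,0) 1"
definition A1 :: "'a::comm_ring_1 mpoly3" where "A1 = Poly_Mapping.single (0,1,0) 1"
definition A2 :: "'a::comm_ring_1 mpoly3" where "A2 = Poly_Mapping.single (0,0,1) 1"

definition Fq :: "nat \<Rightarrow> 'a::field set" where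
  "Fq q = {x. x ^ q = x}"

definition sigma_act :: "'a::comm_ring_1 \<Rightarrow> 'a mpoly3 \<Rightarrow> 'a mpoly3" where
  "sigma_act c f = (\<Sum>m\<in>Poly_Mapping.keys f. case m of (e0, e1, e2) \<Rightarrow>
      const3 (Poly_Mapping.lookup f m) * A0 ^ e0 * (A1 + const3 c * A0) ^ e1
      * (A2 + const3 (2 * c) * A1 + const3 (c ^ 2) * A0) ^ e2)"

text \<open>Weight of the monomial a0^e0 a1^e1 a2^e2 (as an integer, to be read mod q-1).\<close>
definition wt :: "nat \<times> nat \<times> nat \<Rightarrow> int" where
  "wt m = (case m of (e0, e1, e2) \<Rightarrow> int e1 + 2 * int e2)"

definition isobaric :: "nat \<Rightarrow> int \<Rightarrow> 'a::zero mpoly3 \<Rightarrow> bool" where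
  "isobaric q lam f \<longleftrightarrow>
     (\<forall>m\<in>Poly_Mapping.keys f. wt m mod (int q - 1) = lam mod (int q - 1))"

end

theory Submission
  imports Defs "HOL-Computational_Algebra.Polynomial"
begin

definition wtn :: "nat \<times> nat \<times> nat \<Rightarrow> nat" where
  "wtn m = (case m of (e0, e1, e2) \<Rightarrow> e1 + 2 * e2)"

lemma wtn_add: "wtn (a + b) = wtn a + wtn b"
  by (cases a; cases b) (auto simp: wtn_def)

lemma wtn_zero[simp]: "wtn 0 = 0"
  by (simp add: wtn_def zero_prod_def)

definition tau :: "'a::comm_ring_1 \<Rightarrow> 'a mpoly3 \<Rightarrow> 'a mpoly3" where
  "tau t f = Abs_poly_mapping (\<lambda>m. t ^ wtn m * Poly_Mapping.lookup f m)"

lemma lookup_tau: "Poly_Mapping.lookup (tau t f) m = t ^ wtn m * Poly_Mapping.lookup f m"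
proof -
  have "finite {m. t ^ wtn m * Poly_Mapping.lookup f m \<noteq> 0}"
    by (rule finite_subset[OF _ finite_keys[of f]]) (auto simp: in_keys_iff)
  then show ?thesis unfolding tau_def by simp
qed

lemma tau_add: "tau t (f + g) = tau t f + tau t g"
  by (rule poly_mapping_eqI) (simp add: lookup_tau lookup_add algebra_simps)

lemma tau_single: "tau t (Poly_Mapping.single m x) = Poly_Mapping.single m (t ^ wtn m * x)"
  by (rule poly_mapping_eqI) (simp add: lookup_tau lookup_single when_def)

lemma tau_zero: "tau t 0 = 0"
  by (rule poly_mapping_eqI) (simp add: lookup_tau)

lemma tau_sum: "tau t (\<Sum>i\<in>I. g i) = (\<Sum>i\<in>I. tau t (g i))"
  by (induction I rule: infinite_finite_induct) (auto simp: tau_add tau_zero)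

lemma poly_expand: "(f :: 'a::comm_ring_1 mpoly3) = (\<Sum>m\<in>Poly_Mapping.keys f. Poly_Mapping.single m (Poly_Mapping.lookup f m))"
proof (rule poly_mapping_eqI)
  fix k
  show "Poly_Mapping.lookup f k = Poly_Mapping.lookup (\<Sum>m\<in>Poly_Mapping.keys f. Poly_Mapping.single m (Poly_Mapping.lookup f m)) k"
    by (simp add: lookup_sum lookup_single when_def in_keys_iff)
qed

lemma tau_mult: "tau t (f * g) = tau t f * tau t (g :: 'a::comm_ring_1 mpoly3)"
proof -
  let ?F = "\<lambda>m. Poly_Mapping.single m (Poly_Mapping.lookup f m)"
  let ?G = "\<lambda>m. Poly_Mapping.single m (Poly_Mapping.lookup g m)"
  have "f * g = (\<Sum>a\<in>Poly_Mapping.keys f. ?F a) * (\<Sum>b\<in>Poly_Mapping.keys g. ?G b)"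
    using poly_expand[of f] poly_expand[of g] by simp
  also have "\<dots> = (\<Sum>a\<in>Poly_Mapping.keys f. \<Sum>b\<in>Poly_Mapping.keys g. ?F a * ?G b)"
    by (rule sum_product)
  finally have fg: "f * g = \<dots>" .
  have "tau t (f * g) = (\<Sum>a\<in>Poly_Mapping.keys f. \<Sum>b\<in>Poly_Mapping.keys g. tau t (?F a) * tau t (?G b))"
    unfolding fg tau_sum
    by (intro sum.cong refl) (simp add: mult_single tau_single wtn_add power_add mult_ac)
  also have "\<dots> = (\<Sum>a\<in>Poly_Mapping.keys f. tau t (?F a)) * (\<Sum>b\<in>Poly_Mapping.keys g. tau t (?G b))"
    by (rule sum_product[symmetric])
  also have "\<dots> = tau t f * tau t g"
    by (subst (3) poly_expand[of f], subst (3) poly_expand[of g]) (simp add: tau_sum)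
  finally show ?thesis .
qed

lemma tau_one: "tau t (1 :: 'a::comm_ring_1 mpoly3) = 1"
  using tau_single[of t 0 1] by (simp add: single_one[symmetric] del: single_one)

lemma tau_prod: "tau t (\<Prod>i\<in>I. g i) = (\<Prod>i\<in>I. tau t (g i :: 'a::comm_ring_1 mpoly3))"
  by (induction I rule: infinite_finite_induct) (auto simp: tau_mult tau_one)

lemma tau_power: "tau t (g ^ n) = tau t (g :: 'a::comm_ring_1 mpoly3) ^ n"
  by (induction n) (auto simp: tau_mult tau_one)

lemma const3_mult: "const3 (a * b) = const3 a * (const3 b :: 'a::comm_ring_1 mpoly3)"
  by (simp add: const3_def mult_single)

lemma const3_add: "const3 (a + b) = const3 a + (const3 b :: 'a::comm_ring_1 mpoly3)"
  by (simp add: const3_def single_add)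

lemma zero3: "(0::nat\<times>nat\<times>nat) = (0,0,0)"
  by (simp add: zero_prod_def)

lemma const3_one: "const3 1 = (1 :: 'a::comm_ring_1 mpoly3)"
  by (simp add: const3_def zero3[symmetric])

lemma const3_power: "const3 (a ^ n) = (const3 a :: 'a::comm_ring_1 mpoly3) ^ n"
  by (induction n) (auto simp: const3_one const3_mult)

lemma tau_const3: "tau t (const3 k) = const3 k"
  unfolding const3_def tau_single by (simp add: wtn_def)

lemma tau_A0: "tau t A0 = A0"
  unfolding A0_def tau_single by (simp add: wtn_def)

lemma tau_A1: "tau t A1 = const3 t * A1"
  unfolding A1_def tau_single const3_def by (simp add: wtn_def mult_single)

lemma tau_A2: "tau t A2 = const3 (t^2) * A2"
  unfolding A2_def tau_single const3_def by (simp add: wtn_def mult_single)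

lemma tau_X:
  assumes "(t::'a::field) \<noteq> 0"
  shows "tau t (A1 + const3 c * A0) = const3 t * (A1 + const3 (c/t) * A0)"
proof -
  have "const3 t * (A1 + const3 (c/t) * A0) = const3 t * A1 + (const3 t * const3 (c/t)) * A0"
    by (simp add: algebra_simps)
  also have "const3 t * const3 (c/t) = (const3 c :: 'a mpoly3)"
    using assms by (simp add: const3_mult[symmetric])
  finally show ?thesis
    by (simp add: tau_add tau_mult tau_const3 tau_A0 tau_A1)
qed

lemma tau_Y:
  assumes "(t::'a::field) \<noteq> 0"
  shows "tau t (A2 + const3 (2*c) * A1 + const3 (c^2) * A0) =
    const3 (t^2) * (A2 + const3 (2*(c/t)) * A1 + const3 ((c/t)^2) * A0)"
proof -
  have "const3 (t^2) * (A2 + const3 (2*(c/t)) * A1 + const3 ((c/t)^2) * A0) =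
     const3 (t^2) * A2 + (const3 (t^2) * const3 (2*(c/t))) * A1 + (const3 (t^2) * const3 ((c/t)^2)) * A0"
    by (simp add: algebra_simps)
  also have "const3 (t^2) * const3 (2*(c/t)) = (const3 (2*c) * const3 t :: 'a mpoly3)"
    using assms by (simp add: const3_mult[symmetric] power2_eq_square mult_ac)
  also have "const3 (t^2) * const3 ((c/t)^2) = (const3 (c^2) :: 'a mpoly3)"
    using assms by (simp add: const3_mult[symmetric] power2_eq_square)
  finally show ?thesis
    by (simp add: tau_add tau_mult tau_const3 tau_A0 tau_A1 tau_A2 mult.assoc)
qed

lemma tau_term:
  assumes "(t::'a::field) \<noteq> 0"
  shows "tau t (const3 x * A0^e0 * (A1 + const3 c * A0)^e1 * (A2 + const3 (2*c) * A1 + const3 (c^2) * A0)^e2)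
    = const3 (t^(e1+2*e2) * x) * A0^e0 * (A1 + const3 (c/t) * A0)^e1
       * (A2 + const3 (2*(c/t)) * A1 + const3 ((c/t)^2) * A0)^e2"
  unfolding tau_mult tau_power tau_X[OF assms] tau_Y[OF assms] tau_const3 tau_A0
  by (simp add:  tau_const3 tau_A0 power_mult_distrib
      const3_power[symmetric] const3_mult power_add mult_ac flip: power_mult)

lemma lookup_const3_mult: "Poly_Mapping.lookup (const3 k * g) m = k * Poly_Mapping.lookup g (m::nat\<times>nat\<times>nat)"
  unfolding const3_def zero3[symmetric] mult_map_scale_conv_mult[symmetric]
  by (simp add: map.rep_eq when_def)

lemma Fq_pow1:
  assumes "t \<in> Fq q" "t \<noteq> 0" "q \<ge> 1"
  shows "(t::'a::field) ^ (q - 1) = 1"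
proof -
  have "t * t ^ (q - 1) = t * 1"
    using assms by (simp add: Fq_def power_Suc[symmetric])
  then show ?thesis using assms(2) by simp
qed

lemma Fq_pow_mod:
  assumes "t \<in> Fq q" "t \<noteq> 0" "q \<ge> 1"
  shows "(t::'a::field) ^ k = t ^ (k mod (q - 1))"
proof -
  have "t ^ k = t ^ ((q - 1) * (k div (q - 1)) + k mod (q - 1))"
    by (simp only: mult_div_mod_eq)
  also have "\<dots> = (t ^ (q - 1)) ^ (k div (q - 1)) * t ^ (k mod (q - 1))"
    by (simp only: power_add power_mult)
  also have "\<dots> = t ^ (k mod (q - 1))"
    unfolding Fq_pow1[OF assms] by simp
  finally show ?thesis .
qed

lemma Fq_div: "c \<in> Fq q \<Longrightarrow> t \<in> Fq q \<Longrightarrow> (c::'a::field) / t \<in> Fq q"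
  by (simp add: Fq_def power_divide)

lemma Fq_mult: "c \<in> Fq q \<Longrightarrow> t \<in> Fq q \<Longrightarrow> (c::'a::field) * t \<in> Fq q"
  by (simp add: Fq_def power_mult_distrib)

lemma Fq_bij:
  assumes "t \<in> Fq q" "(t::'a::field) \<noteq> 0"
  shows "bij_betw (\<lambda>c. c / t) (Fq q) (Fq q)"
proof (rule bij_betw_imageI)
  show "inj_on (\<lambda>c. c / t) (Fq q)" using assms(2) by (auto simp: inj_on_def)
  show "(\<lambda>c. c / t) ` Fq q = Fq q"
  proof
    show "(\<lambda>c. c / t) ` Fq q \<subseteq> Fq q" using Fq_div assms by blast
    show "Fq q \<subseteq> (\<lambda>c. c / t) ` Fq q"
    proof
      fix c :: 'a assume "c \<in> Fq q"
      then have "c * t \<in> Fq q" "c = (c * t) / t" using Fq_mult assms by auto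
      then show "c \<in> (\<lambda>c. c / t) ` Fq q" by blast
    qed
  qed
qed

lemma roots_contra:
  fixes S :: "'a::field set"
  assumes "finite S" "r < w" "w < k" "card S \<ge> k" "0 \<notin> S" "\<forall>t\<in>S. t ^ r = t ^ w"
  shows False
proof -
  define d where "d = w - r"
  have d: "d \<ge> 1" "d < k" using assms d_def by auto
  define P where "P = (monom (1::'a) d - 1)"
  have "coeff P d = 1" using d by (simp add: P_def)
  then have P0: "P \<noteq> 0" by auto
  have degP: "degree P \<le> d" unfolding P_def
    by (rule degree_diff_le) (auto simp: degree_monom_le)
  have "S \<subseteq> {x. poly P x = 0}"
  proof
    fix t assume t: "t \<in> S"
    have rd: "r + d = w" using assms(2) d_def by simp
    have "t ^ r * 1 = t ^ r * t ^ d"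
      using assms(6) t unfolding power_add[symmetric] rd by simp
    then have "t ^ d = 1" using t assms(5) by (metis mult_left_cancel power_not_zero)
    then show "t \<in> {x. poly P x = 0}" by (simp add: P_def poly_monom)
  qed
  then have "card S \<le> card {x. poly P x = 0}"
    by (intro card_mono poly_roots_finite P0)
  also have "\<dots> \<le> degree P" by (rule card_poly_roots_bound[OF P0])
  finally show False using degP d assms(4) by linarith
qed

lemma tau_sigma:
  assumes "(t::'a::field) \<noteq> 0" and wf: "\<And>m. m \<in> Poly_Mapping.keys f \<Longrightarrow> t ^ wtn m = t ^ w"
  shows "tau t (sigma_act c f) = const3 (t ^ w) * sigma_act (c / t) f"
  unfolding sigma_act_def tau_sum sum_distrib_left
proof (rule sum.cong[OF refl])
  fix m assume m: "m \<in> Poly_Mapping.keys f"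
  obtain e0 e1 e2 where me: "m = (e0, e1, e2)" by (cases m) auto
  have pw: "t ^ (e1 + 2 * e2) = t ^ w" using wf[OF m] by (simp add: me wtn_def)
  show "tau t (case m of (e0, e1, e2) \<Rightarrow>
      const3 (Poly_Mapping.lookup f m) * A0 ^ e0 * (A1 + const3 c * A0) ^ e1
      * (A2 + const3 (2 * c) * A1 + const3 (c ^ 2) * A0) ^ e2) =
    const3 (t ^ w) * (case m of (e0, e1, e2) \<Rightarrow>
      const3 (Poly_Mapping.lookup f m) * A0 ^ e0 * (A1 + const3 (c / t) * A0) ^ e1
      * (A2 + const3 (2 * (c / t)) * A1 + const3 ((c / t) ^ 2) * A0) ^ e2)"
    unfolding me prod.case tau_term[OF assms(1)] pw by (simp add: const3_mult mult_ac)
qed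

theorem lemma2p1:
  fixes p n q :: nat and f :: "'a::field mpoly3" and lam :: int
  assumes "prime p" and "p > 2" and "n \<ge> 1" and "q = p ^ n"
    and "CHAR('a) = p"
    and "card (Fq q :: 'a set) = q"
    and "isobaric q lam f"
    and "card ((\<lambda>c. sigma_act c f) ` (Fq q :: 'a set)) = card (Fq q :: 'a set)"
  shows "isobaric q lam (\<Prod>c\<in>(Fq q :: 'a set). sigma_act c f)"
proof -
  have "p ^ 1 \<le> p ^ n" using assms(2,3) by (intro power_increasing) auto
  then have q3: "q \<ge> 3" using assms(2,4) by simp
  have finF: "finite (Fq q :: 'a set)" using assms(6) q3 by (intro card_ge_0_finite) auto
  define w where "w = nat (lam mod (int q - 1))"
  have w_lt: "w < q - 1" using q3 unfolding w_def by (simp add: nat_less_iff of_nat_diff)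
  have wkey: "wtn m mod (q - 1) = w" if "m \<in> Poly_Mapping.keys f" for m
  proof -
    have "wt m mod (int q - 1) = lam mod (int q - 1)"
      using assms(7) that unfolding isobaric_def by blast
    moreover have "wt m = int (wtn m)" by (cases m) (simp add: wt_def wtn_def)
    moreover have "int (q - 1) = int q - 1" using q3 by simp
    ultimately have "int (wtn m mod (q - 1)) = lam mod (int q - 1)"
      by (metis of_nat_mod)
    then show ?thesis unfolding w_def by simp
  qed
  define P where "P = (\<Prod>c\<in>(Fq q :: 'a set). sigma_act c f)"
  have tauP: "tau t P = const3 (t ^ w) * P" if t: "t \<in> Fq q" "t \<noteq> 0" for t :: 'a
  proof -
    have wf: "t ^ wtn m = t ^ w" if "m \<in> Poly_Mapping.keys f" for m
      using Fq_pow_mod[OF t, of "wtn m"] q3 wkey[OF that] by simp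
    have "tau t P = (\<Prod>c\<in>Fq q. const3 (t ^ w) * sigma_act (c / t) f)"
      unfolding P_def tau_prod using tau_sigma[OF t(2) wf] by simp
    also have "\<dots> = const3 (t ^ w) ^ q * (\<Prod>c\<in>Fq q. sigma_act (c / t) f)"
      by (simp add: prod.distrib assms(6))
    also have "(\<Prod>c\<in>Fq q. sigma_act (c / t) f) = P"
      unfolding P_def using prod.reindex_bij_betw[OF Fq_bij[OF t], of "\<lambda>c. sigma_act c f"] by simp
    also have "const3 (t ^ w) ^ q = (const3 (t ^ w) :: 'a mpoly3)"
    proof -
      have "t ^ q = t" using t(1) by (simp add: Fq_def)
      then have "(t ^ w) ^ q = t ^ w" by (metis power_mult mult.commute)
      then show ?thesis by (simp add: const3_power[symmetric])
    qed
    finally show ?thesis .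
  qed
  show ?thesis
    unfolding isobaric_def P_def[symmetric]
  proof
    fix m assume m: "m \<in> Poly_Mapping.keys P"
    then have Pm: "Poly_Mapping.lookup P m \<noteq> 0" by (simp add: in_keys_iff)
    define r where "r = wtn m mod (q - 1)"
    have r_lt: "r < q - 1" unfolding r_def using q3 by simp
    have eq: "t ^ r = t ^ w" if t: "t \<in> Fq q - {0}" for t :: 'a
    proof -
      have t': "t \<in> Fq q" "t \<noteq> 0" using t by auto
      have "t ^ wtn m * Poly_Mapping.lookup P m = t ^ w * Poly_Mapping.lookup P m"
        using arg_cong[OF tauP[OF t'], of "\<lambda>g. Poly_Mapping.lookup g m"]
        by (simp add: lookup_tau lookup_const3_mult)
      then have "t ^ wtn m = t ^ w" using Pm by simp
      then show ?thesis unfolding r_def using Fq_pow_mod[OF t', of "wtn m"] q3 by simp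
    qed
    have zF: "(0::'a) \<in> Fq q" using q3 by (simp add: Fq_def)
    have cardS: "card (Fq q - {0::'a}) = q - 1" using zF finF assms(6) by simp
    have "r = w"
    proof (rule ccontr)
      assume "r \<noteq> w"
      then consider "r < w" | "w < r" by linarith
      then show False
      proof cases
        case 1 show False
          by (rule roots_contra[of "Fq q - {0}" r w "q - 1"]) (use finF cardS eq w_lt 1 in auto)
      next
        case 2 show False
          by (rule roots_contra[of "Fq q - {0}" w r "q - 1"]) (use finF cardS eq r_lt 2 in \<open>auto simp: eq_commute\<close>)
      qed
    qed
    have "wt m = int (wtn m)" by (cases m) (simp add: wt_def wtn_def)
    then have "wt m mod (int q - 1) = int r"
      unfolding r_def using q3 by (simp add: of_nat_mod of_nat_diff)
    also have "\<dots> = lam mod (int q - 1)"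
      using \<open>r = w\<close> q3 unfolding w_def by simp
    finally show "wt m mod (int q - 1) = lam mod (int q - 1)" .
  qed
qed

end
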